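(* Let $n\in\mathbb{N}$ and let $a_1,\ldots,a_n\ge0$ satisfy $\sum_{j=1}^n a_j=n$. Let $$\mathcal{E}=\Big\{x=(x_1,\ldots,x_n)^t\in\mathbb{R}^n\;\Big|\;\sum_{j=1}^n a_jx_j^2=1\Big\}.$$ Then there is an orthonormal basis $v_1,\ldots,v_n$ of $\mathbb{R}^n$ with $v_j\in\mathcal{E}$ for all $j$. *)

theory Defs
  imports "HOL-Analysis.Analysis"
begin

end

theory Submission
  imports Defs
begin

definition qf :: "real ^ 'n \<Rightarrow> real ^ 'n \<Rightarrow> real" where
  "qf a x = (\<Sum>j\<in>UNIV. a $ j * (x $ j)^2)"

definition orthn :: "'i set \<Rightarrow> ('i \<Rightarrow> real ^ 'n) \<Rightarrow> bool" where
  "orthn I w \<longleftrightarrow> (\<forall>i\<in>I. \<forall>j\<in>I. w i \<bullet> w j = (if i = j then 1 else 0))"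

lemma rot_sum:
  "qf a (c *\<^sub>R u + s *\<^sub>R v) + qf a ((- s) *\<^sub>R u + c *\<^sub>R v) = (c^2 + s^2) * (qf a u + qf a v)"
  unfolding qf_def
  by (simp add: sum.distrib[symmetric] sum_distrib_left power2_eq_square algebra_simps)

lemma rot:
  fixes w :: "'i \<Rightarrow> real ^ 'n"
  assumes fin: "finite I" and o: "orthn I w" and i: "i \<in> I" and j: "j \<in> I" and ij: "i \<noteq> j"
    and qi: "qf a (w i) \<le> 1" and qj: "qf a (w j) \<ge> 1"
  shows "\<exists>w1. orthn I w1 \<and> qf a (w1 i) = 1 \<and> (\<Sum>k\<in>I. qf a (w1 k)) = (\<Sum>k\<in>I. qf a (w k))
           \<and> (\<forall>k\<in>I. w1 k \<in> span (w ` I))"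
proof -
  define f where "f t = qf a (cos t *\<^sub>R w i + sin t *\<^sub>R w j)" for t
  have cont: "\<forall>t. 0 \<le> t \<and> t \<le> pi/2 \<longrightarrow> isCont f t"
    unfolding f_def qf_def by (intro allI impI continuous_intros)
  have "f 0 \<le> 1" "1 \<le> f (pi/2)" using qi qj by (auto simp: f_def)
  then obtain t where t: "f t = 1" using IVT[of f 0 1 "pi/2"] cont by auto
  define c where "c = cos t"
  define s where "s = sin t"
  have cs: "c^2 + s^2 = 1" unfolding c_def s_def by simp
  define w1 where "w1 = w(i := c *\<^sub>R w i + s *\<^sub>R w j, j := (-s) *\<^sub>R w i + c *\<^sub>R w j)"
  have ii: "w i \<bullet> w i = 1" and jj: "w j \<bullet> w j = 1" and ij0: "w i \<bullet> w j = 0" and ji0: "w j \<bullet> w i = 0"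
    using o i j ij unfolding orthn_def by auto
  have ok: "w k \<bullet> w i = 0" "w i \<bullet> w k = 0" "w k \<bullet> w j = 0" "w j \<bullet> w k = 0"
    if "k \<in> I" "k \<noteq> i" "k \<noteq> j" for k
    using o i j that unfolding orthn_def by auto
  have "orthn I w1"
    unfolding orthn_def
  proof (intro ballI)
    fix k l assume k: "k \<in> I" and l: "l \<in> I"
    show "w1 k \<bullet> w1 l = (if k = l then 1 else 0)"
      using ij ii jj ij0 ji0 ok[OF k] ok[OF l] cs o k l
      by (cases "k = i"; cases "k = j"; cases "l = i"; cases "l = j")
         (auto simp: w1_def inner_add_left inner_add_right algebra_simps power2_eq_square orthn_def)
  qed
  moreover have "qf a (w1 i) = 1" using t ij by (simp add: w1_def f_def c_def s_def)
  moreover have "(\<Sum>k\<in>I. qf a (w1 k)) = (\<Sum>k\<in>I. qf a (w k))"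
  proof -
    have e: "I = insert i (insert j (I - {i, j}))" using i j by auto
    have "(\<Sum>k\<in>I. qf a (w1 k)) = qf a (w1 i) + qf a (w1 j) + (\<Sum>k\<in>I - {i,j}. qf a (w1 k))"
      by (subst e) (use fin ij in auto)
    also have "(\<Sum>k\<in>I - {i,j}. qf a (w1 k)) = (\<Sum>k\<in>I - {i,j}. qf a (w k))"
      by (rule sum.cong) (auto simp: w1_def)
    also have "qf a (w1 i) + qf a (w1 j) = qf a (w i) + qf a (w j)"
      using rot_sum[of a c "w i" s "w j"] cs ij by (simp add: w1_def)
    also have "qf a (w i) + qf a (w j) + (\<Sum>k\<in>I - {i,j}. qf a (w k)) = (\<Sum>k\<in>I. qf a (w k))"
      by (subst (2) e) (use fin ij in auto)
    finally show ?thesis .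
  qed
  moreover have "\<forall>k\<in>I. w1 k \<in> span (w ` I)"
    using i j by (auto simp: w1_def span_base span_add span_scale span_diff)
  ultimately show ?thesis by blast
qed

lemma main:
  fixes w :: "'i \<Rightarrow> real ^ 'n"
  shows "finite I \<Longrightarrow> card I = k \<Longrightarrow> orthn I w \<Longrightarrow> (\<Sum>i\<in>I. qf a (w i)) = real (card I) \<Longrightarrow>
    \<exists>w'. orthn I w' \<and> (\<forall>i\<in>I. qf a (w' i) = 1) \<and> (\<forall>i\<in>I. w' i \<in> span (w ` I))"
proof (induction k arbitrary: I w)
  case 0
  then show ?case by (auto simp: orthn_def)
next
  case (Suc k)
  have ne: "I \<noteq> {}" using Suc by auto
  have "\<exists>i\<in>I. qf a (w i) \<le> 1"
  proof (rule ccontr)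
    assume "\<not> ?thesis"
    then have "\<forall>i\<in>I. 1 < qf a (w i)" by force
    then have "(\<Sum>i\<in>I. (1::real)) < (\<Sum>i\<in>I. qf a (w i))"
      using sum_strict_mono[of I "\<lambda>_. 1::real" "\<lambda>i. qf a (w i)"] Suc ne by auto
    then show False using Suc by simp
  qed
  then obtain i where i: "i \<in> I" "qf a (w i) \<le> 1" by blast
  have "\<exists>j\<in>I. qf a (w j) \<ge> 1"
  proof (rule ccontr)
    assume "\<not> ?thesis"
    then have "\<forall>i\<in>I. qf a (w i) < 1" by force
    then have "(\<Sum>i\<in>I. qf a (w i)) < (\<Sum>i\<in>I. (1::real))"
      using sum_strict_mono[of I "\<lambda>i. qf a (w i)" "\<lambda>_. 1::real"] Suc ne by auto
    then show False using Suc by simp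
  qed
  then obtain j where j: "j \<in> I" "qf a (w j) \<ge> 1" by blast
  obtain w1 i0 where w1: "i0 \<in> I" "orthn I w1" "qf a (w1 i0) = 1"
     "(\<Sum>k\<in>I. qf a (w1 k)) = (\<Sum>k\<in>I. qf a (w k))" "\<forall>k\<in>I. w1 k \<in> span (w ` I)"
  proof (cases "qf a (w i) = 1")
    case True
    then show ?thesis using that[of i w] i Suc by (auto simp: span_base)
  next
    case False
    then have "i \<noteq> j" using i j by auto
    then show ?thesis using rot[OF Suc(2) Suc(4) i(1) j(1) _ i(2) j(2)] that i by blast
  qed
  let ?J = "I - {i0}"
  have sJ: "(\<Sum>k\<in>?J. qf a (w1 k)) = real (card ?J)"
    using w1 Suc by (simp add: sum_diff1 of_nat_diff)
  have oJ: "orthn ?J w1" using w1(2) by (auto simp: orthn_def)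
  obtain w2 where w2: "orthn ?J w2" "\<forall>k\<in>?J. qf a (w2 k) = 1" "\<forall>k\<in>?J. w2 k \<in> span (w1 ` ?J)"
  proof -
    have "card ?J = k" using Suc w1(1) by simp
    then show ?thesis using Suc.IH[of ?J w1] Suc(2) oJ sJ that by blast
  qed
  define w' where "w' = w2(i0 := w1 i0)"
  have perp: "w1 i0 \<bullet> x = 0" if "x \<in> span (w1 ` ?J)" for x
  proof -
    have "\<forall>y\<in>w1 ` ?J. orthogonal (w1 i0) y" using w1(1,2) by (auto simp: orthn_def orthogonal_def)
    then have "orthogonal (w1 i0) x" using that by (metis orthogonal_to_span)
    then show ?thesis by (simp add: orthogonal_def)
  qed
  have "orthn I w'"
    unfolding orthn_def
  proof (intro ballI)
    fix k l assume k: "k \<in> I" and l: "l \<in> I"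
    show "w' k \<bullet> w' l = (if k = l then 1 else 0)"
    proof (cases "k = i0"; cases "l = i0")
      assume "k = i0" "l = i0" then show ?thesis using w1 by (auto simp: w'_def orthn_def)
    next
      assume "k = i0" "l \<noteq> i0" then show ?thesis using perp w2 l by (auto simp: w'_def)
    next
      assume a: "k \<noteq> i0" "l = i0"
      then have "w1 i0 \<bullet> w2 k = 0" using perp w2 k by auto
      then show ?thesis using a by (simp add: w'_def inner_commute)
    next
      assume "k \<noteq> i0" "l \<noteq> i0" then show ?thesis using w2 k l by (auto simp: w'_def orthn_def)
    qed
  qed
  moreover have "\<forall>k\<in>I. qf a (w' k) = 1" using w1 w2 by (auto simp: w'_def)
  moreover have "\<forall>k\<in>I. w' k \<in> span (w ` I)"
  proof
    fix k assume k: "k \<in> I"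
    have sub: "span (w1 ` ?J) \<subseteq> span (w ` I)"
      using w1(5) by (intro span_minimal) auto
    show "w' k \<in> span (w ` I)"
      using w1 w2 k sub by (cases "k = i0") (auto simp: w'_def)
  qed
  ultimately show ?case by blast
qed

theorem lemma4:
  fixes a :: "real ^ 'n"
  assumes nonneg: "\<And>j. a $ j \<ge> 0"
    and sum_a: "(\<Sum>j\<in>UNIV. a $ j) = real CARD('n)"
  shows "\<exists>v :: 'n \<Rightarrow> real ^ 'n.
           (\<forall>i j. v i \<bullet> v j = (if i = j then 1 else 0)) \<and>
           span (range v) = UNIV \<and>
           (\<forall>i. (\<Sum>j\<in>UNIV. a $ j * (v i $ j)^2) = 1)"
proof -
  define e :: "'n \<Rightarrow> real ^ 'n" where "e i = axis i 1" for i
  have oe: "orthn UNIV e" by (auto simp: orthn_def e_def inner_axis_axis)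
  have qe: "qf a (e i) = a $ i" for i
  proof -
    have "a $ j * (axis i 1 $ j)^2 = (if i = j then a $ i else 0)" for j :: 'n
      by (simp add: axis_def)
    then show ?thesis by (simp add: qf_def e_def)
  qed
  have "(\<Sum>i\<in>UNIV. qf a (e i)) = real (card (UNIV :: 'n set))" using sum_a by (simp add: qe)
  then have "\<exists>v :: 'n \<Rightarrow> real ^ 'n. orthn UNIV v \<and> (\<forall>i\<in>UNIV. qf a (v i) = 1) \<and> (\<forall>i\<in>UNIV. v i \<in> span (e ` UNIV))"
    using main[OF finite refl oe, of a] by simp
  then obtain v :: "'n \<Rightarrow> real ^ 'n" where v: "orthn UNIV v" "\<forall>i. qf a (v i) = 1" by blast
  have o: "\<forall>i j. v i \<bullet> v j = (if i = j then 1 else 0)" using v(1) by (auto simp: orthn_def)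
  have inj: "inj v"
  proof
    fix x y assume "v x = v y"
    then have "v x \<bullet> v y = 1" using o by (metis)
    then show "x = y" using o by (metis zero_neq_one)
  qed
  have nz: "0 \<notin> range v" using o by (metis imageE inner_zero_left zero_neq_one)
  have po: "pairwise orthogonal (range v)"
    using o inj by (auto simp: pairwise_def orthogonal_def inj_eq)
  have ind: "independent (range v)" using pairwise_orthogonal_independent[OF po nz] .
  have "card (range v) = CARD('n)" using inj by (simp add: card_image)
  then have "UNIV \<subseteq> span (range v)"
    using card_ge_dim_independent[of "range v" UNIV] ind by simp
  then have "span (range v) = UNIV" by auto
  then show ?thesis using o v(2) unfolding qf_def by blast
qed

end
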